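(* On $\ell^2(\mathbb{N}_0)$ (indices starting at $0$) let $\mathbf{L}_1$ be the symmetric tridiagonal infinite matrix with zero diagonal and $[\mathbf{L}_1]_{m,m+1}=[\mathbf{L}_1]_{m+1,m}=\sqrt{m+1}$ for $m\ge0$, and let $\mathbf{L}_3=\operatorname{diag}(0,-1,0,-1,-1,-1,\dots)$. For $k\in\mathbb{Z}\setminus\{0\}$ set $\mathbf{C}_k=ik\mathbf{L}_1-\mathbf{L}_3$ and let $\mathbf{P}_k$ be the infinite matrix equal to the identity except that its upper-left $4\times4$ block is $$\begin{pmatrix}1&-i\alpha/k&0&0\\ i\alpha/k&1&0&0\\0&0&1&-i\beta/2k\\0&0&i\beta/2k&1\end{pmatrix}.$$ With $\alpha=\beta=1/3$ for all $k$, one has, for all $k\in\mathbb{Z}\setminus\{0\}$, $$\mathbf{C}_k^*\mathbf{P}_k+\mathbf{P}_k\mathbf{C}_k\ \ge\ 2\mu\,\mathbf{P}_k,\qquad\mu=0.0206,$$ in the sense of quadratic forms, i.e. $\langle \mathbf{C}_ku,\mathbf{P}_ku\rangle+\langle\mathbf{P}_ku,\mathbf{C}_ku\rangle\ge2\mu\langle u,\mathbf{P}_ku\rangle$ for all finitely supported $u\in\ell^2(\mathbb{N}_0)$.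
   Context: $\langle\cdot,\cdot\rangle$ is the standard (sesquilinear) inner product on $\ell^2(\mathbb{N}_0)$ and $\mathbf{C}_k^*$ the Hermitian adjoint. *)

theory Defs
  imports Complex_Main "HOL-Library.Complex_Order"
begin

text \<open>Infinite matrices on l2(N_0) as functions nat => nat => complex; vectors as
  nat => complex. We only apply them to finitely supported vectors.\<close>

definition fin_supp :: "(nat \<Rightarrow> complex) \<Rightarrow> bool" where
  "fin_supp u \<longleftrightarrow> finite {n. u n \<noteq> 0}"

definition matvec :: "(nat \<Rightarrow> nat \<Rightarrow> complex) \<Rightarrow> (nat \<Rightarrow> complex) \<Rightarrow> nat \<Rightarrow> complex" where
  "matvec A u m = (\<Sum>n\<in>{n. u n \<noteq> 0}. A m n * u n)"

definition inner_l2 :: "(nat \<Rightarrow> complex) \<Rightarrow> (nat \<Rightarrow> complex) \<Rightarrow> complex" where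
  "inner_l2 x y = (\<Sum>n\<in>{n. x n \<noteq> 0}. x n * cnj (y n))"

definition L1 :: "nat \<Rightarrow> nat \<Rightarrow> complex" where
  "L1 m n = (if n = m + 1 then complex_of_real (sqrt (real m + 1))
             else if m = n + 1 then complex_of_real (sqrt (real n + 1)) else 0)"

definition L3 :: "nat \<Rightarrow> nat \<Rightarrow> complex" where
  "L3 m n = (if m = n \<and> m \<noteq> 0 \<and> m \<noteq> 2 then -1 else 0)"

definition Cmat :: "int \<Rightarrow> nat \<Rightarrow> nat \<Rightarrow> complex" where
  "Cmat k m n = \<i> * of_int k * L1 m n - L3 m n"

definition Pmat :: "real \<Rightarrow> real \<Rightarrow> int \<Rightarrow> nat \<Rightarrow> nat \<Rightarrow> complex" where
  "Pmat \<alpha> \<beta> k m n =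
     (if m = 0 \<and> n = 1 then - \<i> * of_real \<alpha> / of_int k
      else if m = 1 \<and> n = 0 then \<i> * of_real \<alpha> / of_int k
      else if m = 2 \<and> n = 3 then - \<i> * of_real \<beta> / (2 * of_int k)
      else if m = 3 \<and> n = 2 then \<i> * of_real \<beta> / (2 * of_int k)
      else if m = n then 1 else 0)"

end

theory Submission
  imports Defs
begin

definition E :: "real \<Rightarrow> real \<Rightarrow> complex \<Rightarrow> complex \<Rightarrow> complex \<Rightarrow> complex" where
 "E a b c z w = of_real a * z * cnj z + of_real b * w * cnj w + cnj z * c * w + z * cnj c * cnj w"

lemma E_real: "E a b c z w = of_real (a*(cmod z)^2 + b*(cmod w)^2 + 2*Re(cnj z * c * w))"
proof -
  have 1: "z * cnj c * cnj w = cnj (cnj z * c * w)" by simp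
  have "cnj z * c * w + z * cnj c * cnj w = of_real (2*Re(cnj z * c * w))"
    unfolding 1 by (rule complex_add_cnj)
  then show ?thesis unfolding E_def
    by (simp add: complex_norm_square[symmetric] mult.assoc)
qed

lemma E_nonneg:
  assumes a: "a \<ge> 0" and b: "b \<ge> 0" and c: "(cmod c)^2 \<le> a*b"
  shows "0 \<le> a*(cmod z)^2 + b*(cmod w)^2 + 2*Re(cnj z * c * w)"
proof -
  define Z where "Z = cmod z" define W where "W = cmod w" define C where "C = cmod c"
  have Z: "Z \<ge> 0" and W: "W \<ge> 0" and C: "C \<ge> 0" by (auto simp: Z_def W_def C_def)
  have "- Re(cnj z * c * w) \<le> cmod (cnj z * c * w)"
    by (metis abs_Re_le_cmod abs_le_iff)
  also have "\<dots> = Z*C*W" by (simp add: Z_def W_def C_def norm_mult)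
  finally have r: "- Re(cnj z * c * w) \<le> Z*C*W" .
  have "(2*Z*C*W)^2 \<le> (a*Z^2 + b*W^2)^2"
  proof -
    have "(2*Z*C*W)^2 = 4*C^2*(Z^2*W^2)" by (simp add: power_mult_distrib)
    also have "\<dots> \<le> 4*(a*b)*(Z^2*W^2)" using c unfolding C_def
      by (intro mult_right_mono mult_left_mono) auto
    also have "\<dots> \<le> (a*Z^2 + b*W^2)^2"
      using sum_squares_ge_zero[of "a*Z^2 - b*W^2" 0]
      by (simp add: power2_eq_square algebra_simps)
    finally show ?thesis .
  qed
  then have "2*Z*C*W \<le> a*Z^2 + b*W^2"
    by (rule power2_le_imp_le) (use a b in auto)
  then show ?thesis using r unfolding Z_def W_def by simp
qed

lemma cmod_ik: assumes "k \<noteq> 0" shows "cmod (- \<i> * complex_of_real r / of_int k) \<le> \<bar>r\<bar>"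
proof -
  have k1: "\<bar>real_of_int k\<bar> \<ge> 1" using assms by linarith
  have p: "\<bar>real_of_int k\<bar> > 0" using assms by simp
  have "\<bar>r\<bar> * 1 \<le> \<bar>r\<bar> * \<bar>real_of_int k\<bar>" by (rule mult_left_mono) (use k1 in auto)
  then have "\<bar>r\<bar> / \<bar>real_of_int k\<bar> \<le> \<bar>r\<bar>" using p by (simp add: pos_divide_le_eq)
  then show ?thesis by (simp add: norm_divide norm_mult)
qed

lemma fin_supp_bound: assumes "fin_supp u" obtains N where "\<forall>n\<ge>N. u n = 0"
proof -
  from assms obtain N where "\<forall>n\<in>{n. u n \<noteq> 0}. n < N"
    unfolding fin_supp_def finite_nat_set_iff_bounded by blast
  then have "\<forall>n\<ge>N. u n = 0" by (auto simp: not_less[symmetric])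
  then show ?thesis by (rule that)
qed

lemma matvec_F:
  assumes "fin_supp u" "finite F" "\<And>n. n \<notin> F \<Longrightarrow> A m n = 0"
  shows "matvec A u m = (\<Sum>n\<in>F. A m n * u n)"
proof -
  let ?S = "{n. u n \<noteq> 0}"
  have fS: "finite ?S" using assms(1) by (simp add: fin_supp_def)
  have "matvec A u m = (\<Sum>n\<in>?S \<union> F. A m n * u n)"
    unfolding matvec_def by (rule sum.mono_neutral_left) (use fS assms(2) in auto)
  also have "\<dots> = (\<Sum>n\<in>F. A m n * u n)"
    by (rule sum.mono_neutral_right) (use fS assms in auto)
  finally show ?thesis .
qed

lemma inner_M:
  assumes "\<forall>n\<ge>M. x n = 0"
  shows "inner_l2 x y = (\<Sum>n<M. x n * cnj (y n))"
  unfolding inner_l2_def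
  by (rule sum.mono_neutral_left) (use assms not_less in auto)

lemma c_0: assumes "fin_supp u" shows "matvec (Cmat k) u 0 = \<i> * of_int k * u 1"
proof -
  have "matvec (Cmat k) u 0 = (\<Sum>n\<in>{0,1}. Cmat k 0 n * u n)"
    by (rule matvec_F) (use assms in \<open>auto simp: Cmat_def L1_def L3_def\<close>)
  then show ?thesis by (simp add: Cmat_def L1_def L3_def)
qed

lemma c_S: assumes "fin_supp u" shows "matvec (Cmat k) u (Suc j) =
   \<i> * of_int k * (of_real (sqrt (real j + 1)) * u j + of_real (sqrt (real j + 2)) * u (Suc (Suc j)))
   + (if j = 1 then 0 else u (Suc j))"
proof -
  have "matvec (Cmat k) u (Suc j) = (\<Sum>n\<in>{j, Suc j, Suc (Suc j)}. Cmat k (Suc j) n * u n)"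
    by (rule matvec_F) (use assms in \<open>auto simp: Cmat_def L1_def L3_def\<close>)
  then show ?thesis by (cases "j = 1") (simp_all add: Cmat_def L1_def L3_def algebra_simps)
qed

lemma w_0: assumes "fin_supp u" shows "matvec (Pmat (1/3) (1/3) k) u 0 =
   u 0 + (- \<i> * of_real(1/3) / of_int k) * u 1"
proof -
  have "matvec (Pmat (1/3) (1/3) k) u 0 = (\<Sum>n\<in>{0,1}. Pmat (1/3) (1/3) k 0 n * u n)"
    by (rule matvec_F) (use assms in \<open>auto simp: Pmat_def\<close>)
  then show ?thesis by (simp add: Pmat_def)
qed

lemma w_1: assumes "fin_supp u" shows "matvec (Pmat (1/3) (1/3) k) u 1 =
   u 1 + \<i> * of_real(1/3) / of_int k * u 0"
proof -
  have "matvec (Pmat (1/3) (1/3) k) u 1 = (\<Sum>n\<in>{0,1}. Pmat (1/3) (1/3) k 1 n * u n)"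
    by (rule matvec_F) (use assms in \<open>auto simp: Pmat_def\<close>)
  then show ?thesis by (simp add: Pmat_def)
qed

lemma w_2: assumes "fin_supp u" shows "matvec (Pmat (1/3) (1/3) k) u 2 =
   u 2 + (- \<i> * of_real(1/3) / (2*of_int k)) * u 3"
proof -
  have "matvec (Pmat (1/3) (1/3) k) u 2 = (\<Sum>n\<in>{2,3}. Pmat (1/3) (1/3) k 2 n * u n)"
    by (rule matvec_F) (use assms in \<open>auto simp: Pmat_def\<close>)
  then show ?thesis by (simp add: Pmat_def)
qed

lemma w_3: assumes "fin_supp u" shows "matvec (Pmat (1/3) (1/3) k) u 3 =
   u 3 + \<i> * of_real(1/3) / (2*of_int k) * u 2"
proof -
  have "matvec (Pmat (1/3) (1/3) k) u 3 = (\<Sum>n\<in>{2,3}. Pmat (1/3) (1/3) k 3 n * u n)"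
    by (rule matvec_F) (use assms in \<open>auto simp: Pmat_def\<close>)
  then show ?thesis by (simp add: Pmat_def)
qed

lemma w_ge4: assumes "fin_supp u" "m \<ge> 4" shows "matvec (Pmat (1/3) (1/3) k) u m = u m"
proof -
  have "matvec (Pmat (1/3) (1/3) k) u m = (\<Sum>n\<in>{m}. Pmat (1/3) (1/3) k m n * u n)"
    by (rule matvec_F) (use assms in \<open>auto simp: Pmat_def\<close>)
  then show ?thesis using assms(2) by (simp add: Pmat_def)
qed

definition H :: "(nat \<Rightarrow> complex) \<Rightarrow> nat \<Rightarrow> complex" where
  "H u m = of_real (sqrt (real m + 1)) * (u (Suc m) * cnj (u m) - cnj (u (Suc m)) * u m)"

definition T :: "int \<Rightarrow> (nat \<Rightarrow> complex) \<Rightarrow> nat \<Rightarrow> complex" where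
  "T k u m = matvec (Cmat k) u m * cnj (matvec (Pmat (1/3) (1/3) k) u m)
     + matvec (Pmat (1/3) (1/3) k) u m * cnj (matvec (Cmat k) u m)
     - 2 * complex_of_real 0.0206 * (u m * cnj (matvec (Pmat (1/3) (1/3) k) u m))"

lemma T_tail: assumes "fin_supp u" "j \<ge> 3"
  shows "T k u (Suc j) = (2 - 2 * complex_of_real 0.0206) * (u (Suc j) * cnj (u (Suc j)))
      + \<i> * of_int k * (H u (Suc j) - H u j)"
proof -
  have "j \<noteq> 1" using assms by auto
  moreover have "matvec (Pmat (1/3) (1/3) k) u (Suc j) = u (Suc j)"
    using assms by (intro w_ge4) auto
  ultimately show ?thesis unfolding T_def H_def c_S[OF assms(1)]
    by (simp add: algebra_simps)
qed

lemma T_sum: assumes "fin_supp u"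
  shows "(\<Sum>m\<in>{4..<4+n}. T k u m) = (\<Sum>m\<in>{4..<4+n}. (2 - 2 * complex_of_real 0.0206) * (u m * cnj (u m)))
     + \<i> * of_int k * (H u (3+n) - H u 3)"
proof (induction n)
  case 0
  then show ?case by simp
next
  case (Suc n)
  have e: "4 + Suc n = Suc (4 + n)" by simp
  have t: "T k u (4+n) = (2 - 2 * complex_of_real 0.0206) * (u (4+n) * cnj (u (4+n)))
      + \<i> * of_int k * (H u (4+n) - H u (3+n))"
    using T_tail[OF assms, of "3+n" k] by simp
  show ?case unfolding e sum.atLeastLessThan_Suc[OF le_add1] Suc t
    by (simp add: algebra_simps)
qed

lemma fin_id:
  fixes ua ub uc ud ue :: complex and k :: int
  assumes k: "k \<noteq> 0"
  defines "kk \<equiv> (of_int k :: complex)"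
  defines "s2 \<equiv> complex_of_real (sqrt 2)" and "s3 \<equiv> complex_of_real (sqrt 3)"
  defines "c0 \<equiv> \<i>*kk*ub" and "c1 \<equiv> \<i>*kk*(ua + s2*uc) + ub"
    and "c2 \<equiv> \<i>*kk*(s2*ub + s3*ud)" and "c3 \<equiv> \<i>*kk*(s3*uc + 2*ue) + ud"
  defines "w0 \<equiv> ua + (- \<i> * of_real(1/3) / kk) * ub"
    and "w1 \<equiv> ub + \<i> * of_real(1/3) / kk * ua"
    and "w2 \<equiv> uc + (- \<i> * of_real(1/3) / (2*kk)) * ud"
    and "w3 \<equiv> ud + \<i> * of_real(1/3) / (2*kk) * uc"
  defines "m2 \<equiv> 2 * complex_of_real 0.0206"
  shows "(c0 * cnj w0 + w0 * cnj c0 - m2 * (ua * cnj w0))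
       + (c1 * cnj w1 + w1 * cnj c1 - m2 * (ub * cnj w1))
       + (c2 * cnj w2 + w2 * cnj c2 - m2 * (uc * cnj w2))
       + (c3 * cnj w3 + w3 * cnj c3 - m2 * (ud * cnj w3))
       - \<i>*kk*(2*(ue*cnj ud - cnj ue * ud)) + (2 - m2) * (ue * cnj ue)
     = E 0.09 1.15 (- \<i> * of_real((1 - 2*0.0206)/3)/kk) ua ub
     + E 0.535 0.416 (of_real(sqrt 2/3)) ua uc
     + E 0.1 (5/9) (of_real(-sqrt 2/6)) ub ud
     + E 0.037 0.7 (- \<i> * of_real((1 - 2*0.0206)/6)/kk) uc ud
     + E 0.059 1.9 (1/3) uc ue
     + of_real (2/3 - 2*0.0206 - 0.09 - 0.535) * (ua * cnj ua)
     + of_real (2 - 2/3 - 2*0.0206 - 1.15 - 0.1) * (ub * cnj ub)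
     + of_real (sqrt 3/3 - 2*0.0206 - 0.416 - 0.037 - 0.059) * (uc * cnj uc)
     + of_real (2 - sqrt 3/3 - 2*0.0206 - 5/9 - 0.7) * (ud * cnj ud)
     + of_real (2 - 2*0.0206 - 1.9) * (ue * cnj ue)"
proof -
  have kk: "kk \<noteq> 0" using k by (simp add: kk_def)
  have ckk: "cnj kk = kk" by (simp add: kk_def)
  show ?thesis
    unfolding E_def c0_def c1_def c2_def c3_def w0_def w1_def w2_def w3_def m2_def s2_def s3_def
    using kk by (simp add: ckk field_simps of_real_diff)
qed
lemma sqrt3: "1.7 \<le> sqrt 3" "sqrt 3 \<le> 1.8"
  by (rule real_le_rsqrt, simp add: power2_eq_square) (rule real_le_lsqrt, auto simp: power2_eq_square)

lemma fin_nonneg: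
  fixes ua ub uc ud ue :: complex and k :: int
  assumes k: "k \<noteq> 0"
  defines "kk \<equiv> (of_int k :: complex)"
  shows "0 \<le> E 0.09 1.15 (- \<i> * of_real((1 - 2*0.0206)/3)/kk) ua ub
     + E 0.535 0.416 (of_real(sqrt 2/3)) ua uc
     + E 0.1 (5/9) (of_real(-sqrt 2/6)) ub ud
     + E 0.037 0.7 (- \<i> * of_real((1 - 2*0.0206)/6)/kk) uc ud
     + E 0.059 1.9 (1/3) uc ue
     + of_real (2/3 - 2*0.0206 - 0.09 - 0.535) * (ua * cnj ua)
     + of_real (2 - 2/3 - 2*0.0206 - 1.15 - 0.1) * (ub * cnj ub)
     + of_real (sqrt 3/3 - 2*0.0206 - 0.416 - 0.037 - 0.059) * (uc * cnj uc)
     + of_real (2 - sqrt 3/3 - 2*0.0206 - 5/9 - 0.7) * (ud * cnj ud)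
     + of_real (2 - 2*0.0206 - 1.9) * (ue * cnj ue)" (is "0 \<le> ?R")
proof -
  have nn: "0 \<le> (of_real r :: complex)" if "r \<ge> 0" for r using that by (simp add: less_eq_complex_def)
  have sq: "0 \<le> (of_real r :: complex) * (z * cnj z)" if "r \<ge> 0" for r z
    using nn[OF mult_nonneg_nonneg[OF that zero_le_power2[of "cmod z"]]]
    by (simp flip: complex_norm_square)
  have Ek: "0 \<le> E a b (- \<i> * of_real r/kk) z w" if "a \<ge> 0" "b \<ge> 0" "r\<^sup>2 \<le> a*b" for a b r z w
  proof -
    have "(cmod (- \<i> * of_real r/kk))^2 \<le> \<bar>r\<bar>^2"
      by (rule power_mono) (use cmod_ik[OF k, of r] in \<open>auto simp: kk_def\<close>)
    then have "(cmod (- \<i> * of_real r/kk))^2 \<le> a*b" using that by simp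
    then show ?thesis unfolding E_real using that by (intro nn E_nonneg) auto
  qed
  have Er: "0 \<le> E a b (of_real r) z w" if "a \<ge> 0" "b \<ge> 0" "r\<^sup>2 \<le> a*b" for a b r z w
    unfolding E_real using that by (intro nn E_nonneg) auto
  have s2: "(sqrt 2 / 3)^2 = 2/9" "(sqrt 2 / 6)^2 = 2/36" by (simp_all add: power_divide)
  have 1: "0 \<le> E 0.09 1.15 (- \<i> * of_real((1 - 2*0.0206)/3)/kk) ua ub" by (rule Ek) (auto simp: power2_eq_square)
  have 2: "0 \<le> E 0.535 0.416 (of_real(sqrt 2/3)) ua uc" by (rule Er) (auto simp: s2)
  have 3: "0 \<le> E 0.1 (5/9) (of_real(-sqrt 2/6)) ub ud" by (rule Er) (auto simp: s2)
  have 4: "0 \<le> E 0.037 0.7 (- \<i> * of_real((1 - 2*0.0206)/6)/kk) uc ud" by (rule Ek) (auto simp: power2_eq_square)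
  have 5: "0 \<le> E 0.059 1.9 (1/3) uc ue" using Er[of "0.059" "1.9" "1/3" uc ue] by (simp add: power2_eq_square)
  have 6: "0 \<le> of_real (2/3 - 2*0.0206 - 0.09 - 0.535) * (ua * cnj ua)" by (rule sq) simp
  have 7: "0 \<le> of_real (2 - 2/3 - 2*0.0206 - 1.15 - 0.1) * (ub * cnj ub)" by (rule sq) simp
  have 8: "0 \<le> of_real (sqrt 3/3 - 2*0.0206 - 0.416 - 0.037 - 0.059) * (uc * cnj uc)" by (rule sq) (use sqrt3 in simp)
  have 9: "0 \<le> of_real (2 - sqrt 3/3 - 2*0.0206 - 5/9 - 0.7) * (ud * cnj ud)" by (rule sq) (use sqrt3 in simp)
  have 10: "0 \<le> of_real (2 - 2*0.0206 - 1.9) * (ue * cnj ue)" by (rule sq) simp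
  show ?thesis using 1 2 3 4 5 6 7 8 9 10 by (intro add_nonneg_nonneg)
qed

theorem lemma4:
  fixes k :: int and u :: "nat \<Rightarrow> complex"
  assumes "k \<noteq> 0" and "fin_supp u"
  shows "inner_l2 (matvec (Cmat k) u) (matvec (Pmat (1/3) (1/3) k) u)
           + inner_l2 (matvec (Pmat (1/3) (1/3) k) u) (matvec (Cmat k) u)
         \<ge> 2 * complex_of_real 0.0206 * inner_l2 u (matvec (Pmat (1/3) (1/3) k) u)"
proof -
  note fs = assms(2)
  obtain N0 where N0: "\<forall>n\<ge>N0. u n = 0" using fin_supp_bound[OF fs] by blast
  define n0 where "n0 = N0 + 2"
  define M where "M = 4 + n0"
  have n0p: "0 < n0" by (simp add: n0_def)
  define c where "c = matvec (Cmat k) u"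
  define w where "w = matvec (Pmat (1/3) (1/3) k) u"
  define kk where "kk = (of_int k :: complex)"
  define m2 where "m2 = 2 * complex_of_real 0.0206"
  have uM: "\<forall>m\<ge>M. u m = 0" using N0 by (auto simp: M_def n0_def)
  have cM: "\<forall>m\<ge>M. c m = 0"
  proof (intro allI impI)
    fix m assume m: "m \<ge> M"
    then obtain j where j: "m = Suc j" "j \<ge> N0" by (cases m) (auto simp: M_def n0_def)
    show "c m = 0" using N0 j unfolding c_def j(1) c_S[OF fs] by auto
  qed
  have wM: "\<forall>m\<ge>M. w m = 0"
    using uM w_ge4[OF fs] by (auto simp: w_def M_def)
  have Q: "inner_l2 c w + inner_l2 w c - m2 * inner_l2 u w = (\<Sum>m<M. T k u m)"
    unfolding inner_M[OF cM] inner_M[OF wM] inner_M[OF uM] T_def c_def[symmetric] w_def[symmetric] m2_def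
    by (simp add: sum.distrib sum_subtractf sum_distrib_left)
  have split: "(\<Sum>m<M. T k u m) = (\<Sum>m<4. T k u m) + (\<Sum>m\<in>{4..<M}. T k u m)"
    using sum.atLeastLessThan_concat[of 0 4 M "T k u"] by (simp add: M_def atLeast0LessThan)
  have H0: "H u (3 + n0) = 0" using N0 unfolding H_def n0_def by auto
  have tail: "(\<Sum>m\<in>{4..<M}. T k u m) = (2 - m2) * (u 4 * cnj (u 4))
      + (\<Sum>m\<in>{5..<M}. (2 - m2) * (u m * cnj (u m))) - \<i> * kk * H u 3"
    using T_sum[OF fs, of k n0] H0 sum.atLeast_Suc_lessThan[of 4 M "\<lambda>m. (2 - m2) * (u m * cnj (u m))"]
    using n0p by (simp add: M_def m2_def kk_def)
  have tailpos: "0 \<le> (\<Sum>m\<in>{5..<M}. (2 - m2) * (u m * cnj (u m)))"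
  proof (rule sum_nonneg)
    fix m
    have eq: "(2 - m2) * (u m * cnj (u m)) = of_real ((2 - 2*0.0206) * (cmod (u m))^2)"
      by (simp add: m2_def flip: complex_norm_square)
    have "0 \<le> complex_of_real ((2 - 2*0.0206) * (cmod (u m))^2)" by (simp add: less_eq_complex_def)
    then show "0 \<le> (2 - m2) * (u m * cnj (u m))" by (simp only: eq)
  qed
  have s4: "(\<Sum>m<4. T k u m) = T k u 0 + T k u 1 + T k u 2 + T k u 3"
    by (simp add: numeral_eq_Suc)
  have cf: "c 0 = \<i>*kk*u 1" "c 1 = \<i>*kk*(u 0 + of_real (sqrt 2)*u 2) + u 1"
    "c 2 = \<i>*kk*(of_real (sqrt 2)*u 1 + of_real (sqrt 3)*u 3)"
    "c 3 = \<i>*kk*(of_real (sqrt 3)*u 2 + 2*u 4) + u 3"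
    using c_0[OF fs, of k] c_S[OF fs, of k 0] c_S[OF fs, of k 1] c_S[OF fs, of k 2]
    by (simp_all add: c_def kk_def numeral_eq_Suc algebra_simps)
  have wf: "w 0 = u 0 + (- \<i> * of_real(1/3) / kk) * u 1"
    "w 1 = u 1 + \<i> * of_real(1/3) / kk * u 0"
    "w 2 = u 2 + (- \<i> * of_real(1/3) / (2*kk)) * u 3"
    "w 3 = u 3 + \<i> * of_real(1/3) / (2*kk) * u 2"
    using w_0[OF fs, of k] w_1[OF fs, of k] w_2[OF fs, of k] w_3[OF fs, of k]
    by (simp_all add: w_def kk_def)
  have H3: "H u 3 = 2*(u 4*cnj (u 3) - cnj (u 4) * u 3)" by (simp add: H_def numeral_eq_Suc)
  have fin: "(\<Sum>m<4. T k u m) - \<i> * kk * H u 3 + (2 - m2) * (u 4 * cnj (u 4)) \<ge> 0"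
    unfolding s4 H3
    unfolding T_def c_def[symmetric] w_def[symmetric] m2_def[symmetric]
    unfolding cf wf
    unfolding fin_id[OF assms(1), where ua="u 0" and ub="u 1" and uc="u 2" and ud="u 3" and ue="u 4", folded kk_def m2_def]
    using fin_nonneg[OF assms(1), where ua="u 0" and ub="u 1" and uc="u 2" and ud="u 3" and ue="u 4", folded kk_def] .
  have "inner_l2 c w + inner_l2 w c - m2 * inner_l2 u w
     = ((\<Sum>m<4. T k u m) - \<i> * kk * H u 3 + (2 - m2) * (u 4 * cnj (u 4)))
       + (\<Sum>m\<in>{5..<M}. (2 - m2) * (u m * cnj (u m)))"
    unfolding Q split tail by (simp add: algebra_simps)
  also have "\<dots> \<ge> 0" using fin tailpos by (rule add_nonneg_nonneg)
  finally show ?thesis unfolding c_def w_def m2_def by simp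
qed

end
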